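(* Let $q\in(0,1)$, $\beta<1$ real, and $t,z\in\mathbb{C}$ with $|t|<|z|<1$. Let $\tau$ satisfy $\alpha(\tau+\tau^{-1})=\beta(z+z^{-1})$. (1) If $\alpha$ is real with $|\alpha|<q$, then \[ \sum_{n=0}^{\infty}\frac{(\beta;q)_n}{(\alpha;q)_n}p_n^{(\alpha,\beta)}(z+z^{-1};q)\,t^n=\frac{1-q^{-1}\alpha}{(1-zt)(1-z^{-1}t)}\,{}_3\phi_2\!\left(q,q\tau t,q\tau^{-1}t;qzt,qz^{-1}t;q,q^{-1}\alpha\right). \] (2) If $\alpha=q$, then \[ \sum_{n=0}^{\infty}\frac{(\beta;q)_n}{(q;q)_n}p_n^{(q,\beta)}(z+z^{-1};q)\,t^n=\frac{(q\tau t,q\tau^{-1}t;q)_\infty}{(zt,z^{-1}t;q)_\infty}. \]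
   Context: $(a;q)_n:=\prod_{j=0}^{n-1}(1-aq^j)$, $n\in\mathbb{N}_0\cup\{\infty\}$, $(a_1,\dots,a_r;q)_n:=\prod_i(a_i;q)_n$. The monic polynomials $p_n^{(\alpha,\beta)}(x;q)$ satisfy $p_{-1}=0$, $p_0=1$, $p_{n+1}(x)=xp_n(x)-\tilde\gamma_{n-1}\tilde\gamma_np_{n-1}(x)$ with $\tilde\gamma_n=(1-\alpha q^n)/(1-\beta q^n)$. ${}_3\phi_2(a_1,a_2,a_3;b_1,b_2;q,w)=\sum_{k\ge0}\frac{(a_1,a_2,a_3;q)_k}{(b_1,b_2,q;q)_k}w^k$. The dependence on $\tau$ is only through $\alpha(\tau+\tau^{-1})=\beta(z+z^{-1})$: e.g. $(q^{-1}\alpha)^k(q\tau t,q\tau^{-1}t;q)_k=\prod_{j=0}^{k-1}\bigl(q^{-1}\alpha(1+q^{2j+2}t^2)-q^jt\beta(z+z^{-1})\bigr)$, which also defines it for $\alpha=0$. *)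

theory Defs
  imports "HOL-Analysis.Analysis"
begin

definition qpoch :: "complex \<Rightarrow> real \<Rightarrow> nat \<Rightarrow> complex" where
  "qpoch a q n = (\<Prod>j<n. 1 - a * of_real (q ^ j))"

definition qpoch_inf :: "complex \<Rightarrow> real \<Rightarrow> complex" where
  "qpoch_inf a q = (\<Prod>j. 1 - a * of_real (q ^ j))"

definition gam :: "real \<Rightarrow> real \<Rightarrow> real \<Rightarrow> nat \<Rightarrow> real" where
  "gam \<alpha> \<beta> q n = (1 - \<alpha> * q ^ n) / (1 - \<beta> * q ^ n)"

text \<open>Monic polynomials p_n^(alpha,beta)(x;q): p_0 = 1, p_1 = x (since p_{-1} = 0),
  p_{n+1} = x p_n - gam_{n-1} gam_n p_{n-1}.\<close>
fun pab :: "real \<Rightarrow> real \<Rightarrow> real \<Rightarrow> nat \<Rightarrow> complex \<Rightarrow> complex" where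
  "pab \<alpha> \<beta> q 0 x = 1"
| "pab \<alpha> \<beta> q (Suc 0) x = x"
| "pab \<alpha> \<beta> q (Suc (Suc n)) x =
     x * pab \<alpha> \<beta> q (Suc n) x
     - of_real (gam \<alpha> \<beta> q n * gam \<alpha> \<beta> q (Suc n)) * pab \<alpha> \<beta> q n x"

text \<open>The factor (q^{-1} alpha)^k (q tau t, q tau^{-1} t; q)_k, written (as in the paper)
  through alpha(tau + tau^{-1}) = beta(z + z^{-1}), which also defines it for alpha = 0.\<close>
definition tau_poch :: "real \<Rightarrow> real \<Rightarrow> real \<Rightarrow> complex \<Rightarrow> complex \<Rightarrow> nat \<Rightarrow> complex" where
  "tau_poch \<alpha> \<beta> q z t k =
     (\<Prod>j<k. of_real (\<alpha> / q) * (1 + of_real (q ^ (2*j+2)) * t^2)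
              - of_real (q ^ j) * t * of_real \<beta> * (z + 1/z))"

definition phi32_tau :: "real \<Rightarrow> real \<Rightarrow> real \<Rightarrow> complex \<Rightarrow> complex \<Rightarrow> complex" where
  "phi32_tau \<alpha> \<beta> q z t =
     (\<Sum>k. qpoch (of_real q) q k * tau_poch \<alpha> \<beta> q z t k
           / (qpoch (of_real q * z * t) q k * qpoch (of_real q * t / z) q k * qpoch (of_real q) q k))"

end

theory Submission
  imports Defs
begin


lemma qpoch_Suc: "qpoch a q (Suc n) = qpoch a q n * (1 - a * of_real (q ^ n))"
  by (simp add: qpoch_def)

lemma qpoch_inf_LIMSEQ:
  fixes q :: real and a :: complex
  assumes q: "0 < q" "q < 1"
  shows "(\<lambda>n. qpoch a q n) \<longlonglongrightarrow> qpoch_inf a q"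
proof -
  have "summable (\<lambda>i. norm ((1 - a * of_real (q ^ i)) - 1))"
    using q by (simp add: norm_mult norm_power summable_geometric)
  then have cp: "convergent_prod (\<lambda>i. 1 - a * of_real (q ^ i))"
    by (intro abs_convergent_prod_imp_convergent_prod summable_imp_abs_convergent_prod)
  have "(\<lambda>n. \<Prod>i\<le>n. 1 - a * of_real (q ^ i)) \<longlonglongrightarrow> qpoch_inf a q"
    using convergent_prod_LIMSEQ[OF cp] by (simp add: qpoch_inf_def)
  then have "(\<lambda>n. qpoch a q (Suc n)) \<longlonglongrightarrow> qpoch_inf a q"
    by (simp add: qpoch_def lessThan_Suc_atMost)
  then show ?thesis by (rule LIMSEQ_imp_Suc)
qed

lemma qpoch_inf_nonzero:
  fixes q :: real and a :: complex
  assumes q: "0 < q" "q < 1" and a: "norm a < 1"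
  shows "qpoch_inf a q \<noteq> 0"
proof -
  have "summable (\<lambda>i. norm ((1 - a * of_real (q ^ i)) - 1))"
    using q by (simp add: norm_mult norm_power summable_geometric)
  then have cp: "convergent_prod (\<lambda>i. 1 - a * of_real (q ^ i))"
    by (intro abs_convergent_prod_imp_convergent_prod summable_imp_abs_convergent_prod)
  have "1 - a * of_real (q ^ i) \<noteq> 0" for i
  proof
    assume "1 - a * of_real (q ^ i) = 0"
    then have "norm (a * of_real (q ^ i)) = 1" by (metis eq_iff_diff_eq_0 norm_one)
    moreover have "norm (a * of_real (q ^ i)) < 1"
    proof -
      have "norm a * q ^ i \<le> norm a" using q by (simp add: mult_left_le power_le_one)
      then show ?thesis using a q by (simp add: norm_mult norm_power)
    qed
    ultimately show False by simp
  qed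
  then show ?thesis using prodinf_nonzero[OF cp] by (simp add: qpoch_inf_def)
qed




definition PP :: "real \<Rightarrow> real \<Rightarrow> real \<Rightarrow> complex \<Rightarrow> nat \<Rightarrow> complex" where
  "PP \<alpha> \<beta> q x n = qpoch (of_real \<beta>) q n / qpoch (of_real \<alpha>) q n * pab \<alpha> \<beta> q n x"

definition dd :: "real \<Rightarrow> real \<Rightarrow> real \<Rightarrow> nat \<Rightarrow> real" where
  "dd \<alpha> \<beta> q n = (1 - \<beta> * q ^ n) / (1 - \<alpha> * q ^ n)"

lemma alpha_nz:
  fixes q \<alpha> :: real
  assumes q: "0 < q" "q < 1" and a: "\<bar>\<alpha>\<bar> \<le> q"
  shows "1 - \<alpha> * q ^ n \<noteq> 0"
proof -
  have "q ^ n \<le> 1" using q by (simp add: power_le_one)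
  then have "\<bar>\<alpha>\<bar> * q ^ n \<le> \<bar>\<alpha>\<bar>" by (intro mult_left_le) auto
  then have "\<bar>\<alpha> * q ^ n\<bar> < 1" using a q by (simp add: abs_mult)
  then show ?thesis by auto
qed

lemma beta_nz:
  fixes q \<beta> :: real
  assumes q: "0 < q" "q < 1" and b: "\<beta> < 1"
  shows "1 - \<beta> * q ^ n \<noteq> 0"
proof (cases "\<beta> \<le> 0")
  case True
  then have "\<beta> * q ^ n \<le> 0" using q by (simp add: mult_nonpos_nonneg)
  then show ?thesis by auto
next
  case False
  have "q ^ n \<le> 1" using q by (simp add: power_le_one)
  then have "\<beta> * q ^ n \<le> \<beta>" using False by (intro mult_left_le) auto
  then show ?thesis using b by auto
qed

lemma qpoch_of_real: "qpoch (of_real a) q n = of_real (\<Prod>j<n. 1 - a * q ^ j)"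
  by (simp add: qpoch_def)

lemma qpoch_real_nz:
  fixes q a :: real
  assumes "\<And>j. 1 - a * q ^ j \<noteq> 0"
  shows "qpoch (of_real a) q n \<noteq> 0"
  by (subst qpoch_of_real, subst of_real_eq_0_iff) (use assms in auto)

lemma PP_0: "PP \<alpha> \<beta> q x 0 = 1"
  by (simp add: PP_def qpoch_def)

lemma PP_1:
  assumes q: "0 < q" "q < 1" and a: "\<bar>\<alpha>\<bar> \<le> q"
  shows "PP \<alpha> \<beta> q x 1 = x * of_real (dd \<alpha> \<beta> q 0)"
  using alpha_nz[OF q a, of 0]
  by (simp add: PP_def qpoch_def dd_def field_simps)

lemma PP_rec:
  assumes q: "0 < q" "q < 1" and a: "\<bar>\<alpha>\<bar> \<le> q" and b: "\<beta> < 1"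
  shows "PP \<alpha> \<beta> q x (Suc (Suc n)) = x * of_real (dd \<alpha> \<beta> q (Suc n)) * PP \<alpha> \<beta> q x (Suc n) - PP \<alpha> \<beta> q x n"
proof -
  define c where "c m = qpoch (of_real \<beta>) q m / qpoch (of_real \<alpha>) q m" for m
  have anz: "\<And>j. 1 - \<alpha> * q ^ j \<noteq> 0" using alpha_nz[OF q a] by blast
  have bnz: "\<And>j. 1 - \<beta> * q ^ j \<noteq> 0" using beta_nz[OF q b] by blast
  have anzc: "\<And>j. 1 - complex_of_real \<alpha> * complex_of_real (q ^ j) \<noteq> 0"
    using anz by (metis of_real_1 of_real_diff of_real_eq_0_iff of_real_mult)
  have bnzc: "\<And>j. 1 - complex_of_real \<beta> * complex_of_real (q ^ j) \<noteq> 0"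
    using bnz by (metis of_real_1 of_real_diff of_real_eq_0_iff of_real_mult)
  have cS: "c (Suc m) = c m * of_real (dd \<alpha> \<beta> q m)" for m
    using anzc[of m] by (simp add: c_def qpoch_Suc dd_def field_simps)
  have dg: "of_real (dd \<alpha> \<beta> q m) * of_real (gam \<alpha> \<beta> q m) = (1::complex)" for m
    using anz[of m] bnz[of m] by (simp add: dd_def gam_def flip: of_real_mult)
  have "PP \<alpha> \<beta> q x (Suc (Suc n)) = c (Suc (Suc n)) * pab \<alpha> \<beta> q (Suc (Suc n)) x"
    by (simp add: PP_def c_def)
  also have "\<dots> = x * (c (Suc (Suc n)) * pab \<alpha> \<beta> q (Suc n) x)
     - c n * (of_real (dd \<alpha> \<beta> q n) * of_real (gam \<alpha> \<beta> q n))
       * (of_real (dd \<alpha> \<beta> q (Suc n)) * of_real (gam \<alpha> \<beta> q (Suc n))) * pab \<alpha> \<beta> q n x"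
    by (simp add: cS algebra_simps)
  also have "\<dots> = x * (c (Suc (Suc n)) * pab \<alpha> \<beta> q (Suc n) x) - c n * pab \<alpha> \<beta> q n x"
    by (simp add: dg)
  also have "\<dots> = x * of_real (dd \<alpha> \<beta> q (Suc n)) * PP \<alpha> \<beta> q x (Suc n) - PP \<alpha> \<beta> q x n"
    by (simp add: PP_def c_def[symmetric] cS[of "Suc n"] algebra_simps)
  finally show ?thesis .
qed




lemma growth:
  fixes P d :: "nat \<Rightarrow> complex" and z x :: complex and q D :: real
  assumes z: "z \<noteq> 0" "norm z < 1" and x: "x = z + 1/z"
   and q: "0 < q" "q < 1" and D: "\<And>n. norm (d n - 1) \<le> D * q ^ n"
   and rec: "\<And>n. P (Suc (Suc n)) = x * d (Suc n) * P (Suc n) - P n"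
  shows "\<exists>B. \<forall>n. norm (P n) \<le> B / norm z ^ n"
proof -
  define u where "u n = P (Suc n) - z * P n" for n
  define w where "w n = P (Suc n) - P n / z" for n
  define m where "m n = norm (u n) + norm (w n)" for n
  define L where "L = 1 / norm (1 - z^2)"
  have D0: "0 \<le> D" using D[of 0] by simp (meson norm_ge_zero order.trans)
  have z2: "1 - z^2 \<noteq> 0"
  proof
    assume "1 - z^2 = 0"
    then have "norm (z^2) = 1" by (metis eq_iff_diff_eq_0 norm_one)
    then show False using z abs_square_less_1[of "norm z"] by (simp add: norm_power)
  qed
  have L0: "L > 0" using z2 by (simp add: L_def)
  have nz1: "norm z \<le> 1" using z by simp
  have mnn: "m n \<ge> 0" for n by (simp add: m_def)
  have Pm: "norm (P (Suc n)) \<le> L * m n" for n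
  proof -
    have "P (Suc n) * (1 - z^2) = u n - z^2 * w n"
      using z by (simp add: u_def w_def field_simps power2_eq_square)
    then have "P (Suc n) = (u n - z^2 * w n) / (1 - z^2)" using z2 by (simp add: field_simps)
    then have "norm (P (Suc n)) = norm (u n - z^2 * w n) * L"
      by (simp add: L_def norm_divide)
    also have "\<dots> \<le> (norm (u n) + norm (z^2) * norm (w n)) * L"
      using L0 by (intro mult_right_mono) (auto intro: order.trans[OF norm_triangle_ineq4] simp: norm_mult)
    also have "\<dots> \<le> m n * L"
    proof -
      have "norm (z^2) * norm (w n) \<le> norm (w n)"
        using nz1 by (simp add: norm_power mult_left_le_one_le power_le_one)
      then show ?thesis using L0 by (intro mult_right_mono) (auto simp: m_def)
    qed
    finally show ?thesis by (simp add: mult.commute)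
  qed
  define e where "e n = x * (d (Suc n) - 1) * P (Suc n)" for n
  have uS: "u (Suc n) = u n / z + e n" for n
    using z by (simp add: u_def e_def rec x field_simps)
  have wS: "w (Suc n) = z * w n + e n" for n
    using z by (simp add: w_def e_def rec x field_simps)
  define E where "E = 2 * norm x * D * L * norm z"
  have E0: "E \<ge> 0" using D0 L0 by (simp add: E_def)
  have en: "norm (e n) \<le> norm x * (D * q ^ Suc n) * (L * m n)" for n
    unfolding e_def norm_mult
    by (intro mult_mono D Pm) (auto simp: D0 L0 mnn q less_imp_le)
  have mS: "m (Suc n) \<le> m n / norm z * (1 + E * q ^ Suc n)" for n
  proof -
    have "m (Suc n) \<le> norm (u n / z) + norm (e n) + (norm (z * w n) + norm (e n))"
      unfolding m_def uS wS by (intro add_mono norm_triangle_ineq)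
    also have "\<dots> \<le> norm (u n) / norm z + norm (w n) / norm z + 2 * norm (e n)"
    proof -
      have "norm z * norm (w n) \<le> norm (w n) / norm z"
      proof -
        have "norm z * norm (w n) \<le> norm (w n)" using nz1 by (simp add: mult_left_le_one_le)
        also have "\<dots> \<le> norm (w n) / norm z" using z nz1 by (simp add: le_divide_eq mult_left_le)
        finally show ?thesis .
      qed
      then show ?thesis by (simp add: norm_divide norm_mult)
    qed
    also have "\<dots> \<le> m n / norm z + 2 * (norm x * (D * q ^ Suc n) * (L * m n))"
      using en[of n] by (simp add: m_def add_divide_distrib)
    also have "\<dots> = m n / norm z * (1 + E * q ^ Suc n)"
      using z by (simp add: E_def field_simps)
    finally show ?thesis .
  qed
  have claim: "m n * norm z ^ n \<le> m 0 * exp (E * (\<Sum>j<n. q ^ Suc j))" for n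
  proof (induction n)
    case 0 then show ?case by simp
  next
    case (Suc n)
    have "m (Suc n) * norm z ^ Suc n \<le> m n / norm z * (1 + E * q ^ Suc n) * norm z ^ Suc n"
      using mS[of n] by (intro mult_right_mono) auto
    also have "\<dots> = (m n * norm z ^ n) * (1 + E * q ^ Suc n)"
      using z by (simp add: field_simps)
    also have "\<dots> \<le> (m 0 * exp (E * (\<Sum>j<n. q ^ Suc j))) * exp (E * q ^ Suc n)"
    proof (rule mult_mono[OF Suc.IH])
      show "1 + E * q ^ Suc n \<le> exp (E * q ^ Suc n)" by (rule exp_ge_add_one_self)
      show "0 \<le> m 0 * exp (E * (\<Sum>j<n. q ^ Suc j))" using mnn by simp
      show "0 \<le> 1 + E * q ^ Suc n" using E0 q by simp
    qed
    also have "\<dots> = m 0 * exp (E * (\<Sum>j<Suc n. q ^ Suc j))"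
      by (simp add: exp_add[symmetric] algebra_simps)
    finally show ?case .
  qed
  define M where "M = m 0 * exp (E / (1 - q))"
  have mb: "m n * norm z ^ n \<le> M" for n
  proof -
    have "(\<Sum>j<n. q ^ Suc j) \<le> (\<Sum>j<n. q ^ j)"
      using q by (intro sum_mono) (simp add: mult_left_le_one_le)
    also have "\<dots> = (1 - q ^ n) / (1 - q)" using q by (simp add: sum_gp_strict)
    also have "\<dots> \<le> 1 / (1 - q)" using q by (simp add: divide_right_mono)
    finally have "E * (\<Sum>j<n. q ^ Suc j) \<le> E * (1 / (1 - q))" using E0 by (rule mult_left_mono)
    then have "E * (\<Sum>j<n. q ^ Suc j) \<le> E / (1 - q)" by simp
    then have "exp (E * (\<Sum>j<n. q ^ Suc j)) \<le> exp (E / (1 - q))" by simp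
    then show ?thesis using claim[of n] mnn[of 0] unfolding M_def
      by (meson mult_left_mono order.trans)
  qed
  define B where "B = max (norm (P 0)) (L * M * norm z)"
  have "norm (P n) \<le> B / norm z ^ n" for n
  proof (cases n)
    case 0 then show ?thesis by (simp add: B_def)
  next
    case (Suc k)
    have "norm (P (Suc k)) \<le> L * m k" by (rule Pm)
    also have "\<dots> \<le> L * (M / norm z ^ k)"
      using mb[of k] L0 z by (intro mult_left_mono) (auto simp: le_divide_eq)
    also have "\<dots> = L * M * norm z / norm z ^ Suc k" using z by (simp add: field_simps)
    also have "\<dots> \<le> B / norm z ^ Suc k" using z by (intro divide_right_mono) (auto simp: B_def)
    finally show ?thesis using Suc by simp
  qed
  then show ?thesis by blast
qed




locale gf =
  fixes q \<alpha> \<beta> :: real and z :: complex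
  assumes q: "0 < q" "q < 1" and a: "\<bar>\<alpha>\<bar> \<le> q" and b: "\<beta> < 1"
    and z: "z \<noteq> 0" "norm z < 1"
begin

abbreviation "P \<equiv> PP \<alpha> \<beta> q (z + 1/z)"

definition F :: "complex \<Rightarrow> complex" where "F t = (\<Sum>n. P n * t ^ n)"

lemma dd_bound: "norm (complex_of_real (dd \<alpha> \<beta> q n) - 1) \<le> (\<bar>\<alpha> - \<beta>\<bar> / (1 - q)) * q ^ n"
proof -
  have anz: "1 - \<alpha> * q ^ n \<noteq> 0" using alpha_nz[OF q a] .
  have "q ^ n \<le> 1" using q by (simp add: power_le_one)
  then have "\<bar>\<alpha>\<bar> * q ^ n \<le> \<bar>\<alpha>\<bar>" by (intro mult_left_le) auto
  then have "\<bar>\<alpha> * q ^ n\<bar> \<le> q" using a q by (simp add: abs_mult)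
  then have den: "1 - q \<le> \<bar>1 - \<alpha> * q ^ n\<bar>" by linarith
  have "dd \<alpha> \<beta> q n - 1 = (\<alpha> - \<beta>) * q ^ n / (1 - \<alpha> * q ^ n)"
    using anz by (simp add: dd_def field_simps)
  moreover have "norm (complex_of_real (dd \<alpha> \<beta> q n) - 1) = \<bar>dd \<alpha> \<beta> q n - 1\<bar>"
    by (metis norm_of_real of_real_1 of_real_diff)
  ultimately have "norm (complex_of_real (dd \<alpha> \<beta> q n) - 1) = \<bar>\<alpha> - \<beta>\<bar> * q ^ n / \<bar>1 - \<alpha> * q ^ n\<bar>"
    using q by (simp add: abs_mult abs_divide)
  also have "\<dots> \<le> \<bar>\<alpha> - \<beta>\<bar> * q ^ n / (1 - q)"
    by (rule divide_left_mono[OF den]) (use q anz in auto)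
  finally show ?thesis by simp
qed

lemma P_bound: "\<exists>B. \<forall>n. norm (P n) \<le> B / norm z ^ n"
  using growth[where P=P and d="\<lambda>n. complex_of_real (dd \<alpha> \<beta> q n)" and x="z + 1/z"
      and D="\<bar>\<alpha> - \<beta>\<bar> / (1 - q)" and q=q and z=z] z q dd_bound PP_rec[OF q a b]
  by blast

lemma P_summable:
  assumes t: "norm t < norm z"
  shows "summable (\<lambda>n. norm (P n * t ^ n))"
proof -
  obtain B where B: "\<And>n. norm (P n) \<le> B / norm z ^ n" using P_bound by blast
  have cmp: "norm (norm (P n * t ^ n)) \<le> B * (norm t / norm z) ^ n" for n
  proof -
    have "norm (P n * t ^ n) = norm (P n) * norm t ^ n" by (simp add: norm_mult norm_power)
    also have "\<dots> \<le> B / norm z ^ n * norm t ^ n" by (intro mult_right_mono B) auto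
    also have "\<dots> = B * (norm t / norm z) ^ n" by (simp add: power_divide)
    finally show ?thesis by simp
  qed
  have sg: "summable (\<lambda>n. B * (norm t / norm z) ^ n)"
    using t z by (intro summable_mult summable_geometric) auto
  show ?thesis by (rule summable_comparison_test'[OF sg]) (rule cmp)
qed

lemma F_sums: "norm t < norm z \<Longrightarrow> (\<lambda>n. P n * t ^ n) sums F t"
  unfolding F_def by (rule summable_sums, rule summable_norm_cancel, rule P_summable)

lemma F_0: "F 0 = 1"
  unfolding F_def by (simp add: PP_0)

lemma F_tendsto:
  assumes "s \<longlonglongrightarrow> 0"
  shows "(\<lambda>n. F (s n)) \<longlonglongrightarrow> 1"
proof -
  define K where "K = complex_of_real (norm z / 2)"
  have K: "norm K < norm z" "0 < norm K" using z by (auto simp: K_def)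
  have "isCont (\<lambda>t. \<Sum>n. P n * t ^ n) 0"
    by (rule isCont_powser[of _ K], rule summable_norm_cancel, rule P_summable) (use K in auto)
  then have "isCont F 0" unfolding F_def[abs_def] .
  then show ?thesis using isCont_tendsto_compose[OF _ assms] F_0 by force
qed

end




lemma aux_ring: "(u::complex) * (X * d * p - r) = X * (d * u) * p - u * r"
  by (simp add: algebra_simps)

context gf begin

definition A :: "complex \<Rightarrow> complex" where
  "A t = of_real (\<alpha> / q) * (1 + of_real (q^2) * t^2) - of_real \<beta> * (z + 1/z) * t"

lemma P_rec':
  "(1 - of_real \<alpha> * of_real q ^ (Suc i)) * P (Suc (Suc i))
     = (z + 1/z) * (1 - of_real \<beta> * of_real q ^ (Suc i)) * P (Suc i)
       - (1 - of_real \<alpha> * of_real q ^ (Suc i)) * P i"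
proof -
  have anz: "1 - \<alpha> * q ^ Suc i \<noteq> 0" using alpha_nz[OF q a] .
  have "complex_of_real (dd \<alpha> \<beta> q (Suc i)) * (1 - of_real \<alpha> * of_real q ^ (Suc i))
        = 1 - of_real \<beta> * of_real q ^ (Suc i)"
  proof -
    have "dd \<alpha> \<beta> q (Suc i) * (1 - \<alpha> * q ^ (Suc i)) = 1 - \<beta> * q ^ (Suc i)"
      using anz by (simp add: dd_def)
    then show ?thesis by (metis of_real_1 of_real_diff of_real_mult of_real_power)
  qed
  note dd1 = this
  have "(1 - of_real \<alpha> * of_real q ^ (Suc i)) * P (Suc (Suc i))
     = (1 - of_real \<alpha> * of_real q ^ (Suc i)) * ((z + 1/z) * of_real (dd \<alpha> \<beta> q (Suc i)) * P (Suc i) - P i)"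
    by (simp only: PP_rec[OF q a b])
  also have "\<dots> = (z + 1/z) * (complex_of_real (dd \<alpha> \<beta> q (Suc i)) * (1 - of_real \<alpha> * of_real q ^ (Suc i))) * P (Suc i)
       - (1 - of_real \<alpha> * of_real q ^ (Suc i)) * P i"
    by (rule aux_ring)
  also have "\<dots> = (z + 1/z) * (1 - of_real \<beta> * of_real q ^ (Suc i)) * P (Suc i)
       - (1 - of_real \<alpha> * of_real q ^ (Suc i)) * P i"
    by (simp only: dd1)
  finally show ?thesis .
qed

lemma FE:
  assumes t: "norm t < norm z"
  shows "(1 - z*t) * (1 - t/z) * F t = (1 - of_real (\<alpha>/q)) + A t * F (of_real q * t)"
proof -
  define x where "x = z + 1/z"
  define c where "c = complex_of_real (\<alpha>/q)"
  define s where "s = complex_of_real q * t"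
  have "norm s = q * norm t" using q by (simp add: s_def norm_mult)
  also have "\<dots> \<le> norm t" using q by (intro mult_left_le_one_le) auto
  finally have s: "norm s < norm z" using t by simp
  define a where "a n = P n * t ^ n" for n
  define bb where "bb n = P n * s ^ n" for n
  have sa: "a sums F t" unfolding a_def by (rule F_sums[OF t])
  have sb: "bb sums F s" unfolding bb_def by (rule F_sums[OF s])
  have sa2: "(\<lambda>i. a (i + 2)) sums (F t - (a 0 + a 1))"
    using sums_split_initial_segment[OF sa, of 2] by (simp add: numeral_2_eq_2)
  have sb2: "(\<lambda>i. bb (i + 2)) sums (F s - (bb 0 + bb 1))"
    using sums_split_initial_segment[OF sb, of 2] by (simp add: numeral_2_eq_2)
  have sa1: "(\<lambda>i. a (i + 1)) sums (F t - a 0)"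
    using sums_split_initial_segment[OF sa, of 1] by simp
  have sb1: "(\<lambda>i. bb (i + 1)) sums (F s - bb 0)"
    using sums_split_initial_segment[OF sb, of 1] by simp
  have L: "(\<lambda>i. a (i + 2) - c * bb (i + 2)) sums ((F t - (a 0 + a 1)) - c * (F s - (bb 0 + bb 1)))"
    by (intro sums_diff sums_mult sa2 sb2)
  have R: "(\<lambda>i. x * t * a (i + 1) - x * of_real \<beta> * t * bb (i + 1) - t^2 * a i + of_real \<alpha> * of_real q * t^2 * bb i)
     sums (x * t * (F t - a 0) - x * of_real \<beta> * t * (F s - bb 0) - t^2 * F t + of_real \<alpha> * of_real q * t^2 * F s)"
    by (intro sums_diff sums_add sums_mult sa1 sb1 sa sb)
  have eq: "a (i + 2) - c * bb (i + 2) = x * t * a (i + 1) - x * of_real \<beta> * t * bb (i + 1) - t^2 * a i + of_real \<alpha> * of_real q * t^2 * bb i" for i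
  proof -
    have "a (i + 2) - c * bb (i + 2) = t ^ (i+2) * ((1 - of_real \<alpha> * of_real q ^ (Suc i)) * P (Suc (Suc i)))"
      using q by (simp add: a_def bb_def c_def s_def power_mult_distrib field_simps)
    also have "\<dots> = t ^ (i+2) * ((z + 1/z) * (1 - of_real \<beta> * of_real q ^ (Suc i)) * P (Suc i)
       - (1 - of_real \<alpha> * of_real q ^ (Suc i)) * P i)" by (simp only: P_rec')
    also have "\<dots> = x * t * a (i + 1) - x * of_real \<beta> * t * bb (i + 1) - t^2 * a i + of_real \<alpha> * of_real q * t^2 * bb i"
      by (simp add: a_def bb_def x_def s_def power_mult_distrib power2_eq_square algebra_simps)
    finally show ?thesis .
  qed
  have main: "(F t - (a 0 + a 1)) - c * (F s - (bb 0 + bb 1)) = x * t * (F t - a 0) - x * of_real \<beta> * t * (F s - bb 0) - t^2 * F t + of_real \<alpha> * of_real q * t^2 * F s"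
  proof -
    have L': "(\<lambda>i. x * t * a (i + 1) - x * of_real \<beta> * t * bb (i + 1) - t^2 * a i + of_real \<alpha> * of_real q * t^2 * bb i)
       sums ((F t - (a 0 + a 1)) - c * (F s - (bb 0 + bb 1)))"
      using L by (simp only: eq)
    show ?thesis by (rule sums_unique2[OF L' R])
  qed
  have a0: "a 0 = 1" "bb 0 = 1" by (simp_all add: a_def bb_def PP_0)
  have P1: "P 1 * (1 - of_real \<alpha>) = x * (1 - of_real \<beta>)"
  proof -
    have anz: "1 - \<alpha> \<noteq> 0" using alpha_nz[OF q a, of 0] by simp
    have "dd \<alpha> \<beta> q 0 * (1 - \<alpha>) = 1 - \<beta>" using anz by (simp add: dd_def)
    then have "complex_of_real (dd \<alpha> \<beta> q 0) * (1 - of_real \<alpha>) = 1 - of_real \<beta>"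
      by (metis of_real_1 of_real_diff of_real_mult)
    moreover have "P 1 = x * of_real (dd \<alpha> \<beta> q 0)" unfolding x_def by (rule PP_1[OF q a])
    ultimately show ?thesis by (simp add: mult.assoc)
  qed
  have a1: "a 1 = P 1 * t" "bb 1 = P 1 * s" by (simp_all add: a_def bb_def)
  have zt: "(1 - z*t) * (1 - t/z) = 1 - x * t + t^2"
    using z by (simp add: x_def field_simps power2_eq_square)
  have As: "A t = c * (1 + of_real (q^2) * t^2) - of_real \<beta> * x * t"
    by (simp add: A_def c_def x_def)
  have cq: "c * s = of_real \<alpha> * t" "c * of_real (q^2) = of_real \<alpha> * of_real q"
    using q by (simp_all add: c_def s_def power2_eq_square)
  show ?thesis
    unfolding zt As s_def[symmetric] c_def[symmetric]
    using main P1 cq unfolding a0 a1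
    by algebra
qed

end



lemma aux_iter:
  fixes dK pd pf c1 fK Fs Fs' :: complex
  assumes "dK \<noteq> 0" "pd \<noteq> 0" "dK * Fs = c1 + fK * Fs'"
  shows "pf / pd * Fs = c1 * pf / (pd * dK) + pf * fK / (pd * dK) * Fs'"
proof -
  have "pf / pd * Fs = pf / (pd * dK) * (dK * Fs)" using assms(1) by simp
  also have "\<dots> = pf / (pd * dK) * (c1 + fK * Fs')" using assms(3) by simp
  also have "\<dots> = c1 * pf / (pd * dK) + pf * fK / (pd * dK) * Fs'" by (simp add: algebra_simps add_divide_distrib)
  finally show ?thesis .
qed

context gf begin

definition sj :: "complex \<Rightarrow> nat \<Rightarrow> complex" where "sj t j = of_real (q ^ j) * t"
definition den :: "complex \<Rightarrow> nat \<Rightarrow> complex" where "den t j = (1 - z * sj t j) * (1 - sj t j / z)"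
definition fac :: "complex \<Rightarrow> nat \<Rightarrow> complex" where
  "fac t j = of_real (\<alpha> / q) * (1 + of_real (q ^ (2*j+2)) * t^2) - of_real (q ^ j) * t * of_real \<beta> * (z + 1/z)"

lemma tau_poch_fac: "tau_poch \<alpha> \<beta> q z t k = (\<Prod>j<k. fac t j)"
  by (simp add: tau_poch_def fac_def)

lemma sj_norm: assumes t: "norm t < norm z" shows "norm (sj t j) < norm z"
proof -
  have "norm (sj t j) = q ^ j * norm t" using q by (simp add: sj_def norm_mult norm_power)
  also have "\<dots> \<le> norm t" using q by (intro mult_left_le_one_le) (auto simp: power_le_one)
  finally show ?thesis using t by simp
qed

lemma den_nz: assumes t: "norm t < norm z" shows "den t j \<noteq> 0"
proof -
  have s: "norm (sj t j) < norm z" by (rule sj_norm[OF t])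
  have "norm (z * sj t j) < 1"
  proof -
    have "norm (z * sj t j) = norm z * norm (sj t j)" by (simp add: norm_mult)
    also have "\<dots> \<le> norm (sj t j)" using z by (intro mult_left_le_one_le) auto
    finally show ?thesis using s z by simp
  qed
  moreover have "norm (sj t j / z) < 1" using s z by (simp add: norm_divide divide_less_eq)
  ultimately have "1 - z * sj t j \<noteq> 0" "1 - sj t j / z \<noteq> 0"
    by (metis eq_iff_diff_eq_0 norm_one less_irrefl)+
  then show ?thesis by (simp add: den_def)
qed

lemma fac_A: "fac t j = A (sj t j)"
  by (simp add: fac_def A_def sj_def power_mult_distrib power_add power_mult algebra_simps power2_eq_square)

lemma FE_j:
  assumes t: "norm t < norm z"
  shows "den t j * F (sj t j) = (1 - of_real (\<alpha>/q)) + fac t j * F (sj t (Suc j))"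
proof -
  have "sj t (Suc j) = of_real q * sj t j" by (simp add: sj_def)
  then show ?thesis using FE[OF sj_norm[OF t, of j]] by (simp add: den_def fac_A)
qed

lemma iterate:
  assumes t: "norm t < norm z"
  shows "F t = (\<Sum>k<K. (1 - of_real (\<alpha>/q)) * (\<Prod>j<k. fac t j) / (\<Prod>j<Suc k. den t j))
              + (\<Prod>j<K. fac t j / den t j) * F (sj t K)"
proof (induction K)
  case 0 then show ?case by (simp add: sj_def)
next
  case (Suc K)
  have dn: "den t K \<noteq> 0" by (rule den_nz[OF t])
  have pn: "(\<Prod>j<K. den t j) \<noteq> 0" using den_nz[OF t] by (simp add: prod_zero_iff)
  have  "(\<Prod>j<K. fac t j / den t j) * F (sj t K)
     = (1 - of_real (\<alpha>/q)) * (\<Prod>j<K. fac t j) / (\<Prod>j<Suc K. den t j)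
       + (\<Prod>j<Suc K. fac t j / den t j) * F (sj t (Suc K))"
    unfolding prod_dividef prod.lessThan_Suc
    by (rule aux_iter[OF dn pn FE_j[OF t, of K]])
  then show ?case using Suc.IH by simp
qed

lemma sj_tendsto: "sj t \<longlonglongrightarrow> 0"
proof -
  have "(\<lambda>j. complex_of_real (q ^ j)) \<longlonglongrightarrow> of_real 0"
    using q by (intro tendsto_of_real LIMSEQ_power_zero) auto
  then show ?thesis unfolding sj_def[abs_def] by (auto intro: tendsto_mult_left_zero)
qed

lemma fac_den_tendsto: "(\<lambda>j. fac t j / den t j) \<longlonglongrightarrow> of_real (\<alpha>/q)"
proof -
  have q2: "(\<lambda>j. q ^ (2*j+2)) = (\<lambda>j. q^2 * (q^2)^j)"
  proof
    fix j
    have "q ^ (2*j+2) = q ^ (2*j) * q^2" by (rule power_add)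
    also have "q ^ (2*j) = (q^2)^j" by (rule power_mult)
    finally show "q ^ (2*j+2) = q^2 * (q^2)^j" by (simp add: mult.commute)
  qed
  have "(\<lambda>j. q ^ (2*j+2)) \<longlonglongrightarrow> 0"
    unfolding q2 using q by (intro tendsto_mult_right_zero LIMSEQ_power_zero) (auto simp: power_less_one_iff abs_square_less_1)
  then have h1: "(\<lambda>j. complex_of_real (q ^ (2*j+2))) \<longlonglongrightarrow> of_real 0" by (intro tendsto_of_real)
  have h2: "(\<lambda>j. complex_of_real (q ^ j)) \<longlonglongrightarrow> of_real 0"
    using q by (intro tendsto_of_real LIMSEQ_power_zero) auto
  have "(\<lambda>j. fac t j) \<longlonglongrightarrow> of_real (\<alpha>/q) * (1 + 0 * t^2) - 0 * t * of_real \<beta> * (z + 1/z)"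
    unfolding fac_def[abs_def] using h1 h2 by (intro tendsto_intros) auto
  moreover have "(\<lambda>j. den t j) \<longlonglongrightarrow> (1 - z * 0) * (1 - 0 / z)"
    unfolding den_def[abs_def] using sj_tendsto z by (intro tendsto_intros) auto
  ultimately show ?thesis by (auto dest: tendsto_divide)
qed

end



context gf begin

lemma part1_sums:
  assumes al: "\<bar>\<alpha>\<bar> < q" and t: "norm t < norm z"
  shows "(\<lambda>k. (1 - of_real (\<alpha>/q)) * (\<Prod>j<k. fac t j) / (\<Prod>j<Suc k. den t j)) sums F t"
proof -
  define g where "g j = fac t j / den t j" for j
  define h where "h K = (\<Prod>j<K. g j)" for K
  define \<epsilon> where "\<epsilon> = (1 - \<bar>\<alpha>\<bar>/q) / 2"
  define \<rho> where "\<rho> = (1 + \<bar>\<alpha>\<bar>/q) / 2"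
  have aq: "\<bar>\<alpha>\<bar>/q < 1" using al q by simp
  have ep: "\<epsilon> > 0" using aq by (simp add: \<epsilon>_def)
  have rho: "\<rho> < 1" using aq by (simp add: \<rho>_def)
  have "g \<longlonglongrightarrow> of_real (\<alpha>/q)" unfolding g_def by (rule fac_den_tendsto)
  then have "eventually (\<lambda>j. dist (g j) (of_real (\<alpha>/q)) < \<epsilon>) sequentially"
    using ep by (rule tendstoD)
  then obtain N where N: "\<And>j. j \<ge> N \<Longrightarrow> dist (g j) (of_real (\<alpha>/q)) < \<epsilon>"
    by (auto simp: eventually_sequentially)
  have gb: "norm (g j) \<le> \<rho>" if "j \<ge> N" for j
  proof -
    have "norm (g j) \<le> norm (complex_of_real (\<alpha>/q)) + dist (g j) (of_real (\<alpha>/q))"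
      by (metis dist_norm norm_triangle_sub add.commute)
    also have "\<dots> \<le> \<bar>\<alpha>\<bar>/q + \<epsilon>"
    proof -
      have "norm (complex_of_real (\<alpha>/q)) = \<bar>\<alpha>\<bar>/q" using q by (simp only: norm_of_real abs_divide)
      then show ?thesis using N[OF that] by linarith
    qed
    also have "\<dots> = \<rho>" by (simp add: \<epsilon>_def \<rho>_def field_simps)
    finally show ?thesis .
  qed
  have "summable h"
  proof (rule summable_ratio_test[OF rho])
    fix n assume "n \<ge> N"
    then show "norm (h (Suc n)) \<le> \<rho> * norm (h n)"
      using gb[of n] by (simp add: h_def norm_mult mult.commute mult_right_mono)
  qed
  then have h0: "h \<longlonglongrightarrow> 0" by (rule summable_LIMSEQ_zero)
  have "(\<lambda>K. h K * F (sj t K)) \<longlonglongrightarrow> 0 * 1"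
    by (intro tendsto_mult h0 F_tendsto sj_tendsto)
  then have "(\<lambda>K. F t - h K * F (sj t K)) \<longlonglongrightarrow> F t - 0 * 1"
    by (intro tendsto_diff tendsto_const)
  moreover have "F t - h K * F (sj t K) = (\<Sum>k<K. (1 - of_real (\<alpha>/q)) * (\<Prod>j<k. fac t j) / (\<Prod>j<Suc k. den t j))" for K
    using iterate[OF t, of K] by (simp add: h_def g_def)
  ultimately show ?thesis by (simp add: sums_def)
qed

end



context gf begin

lemma norm_zt: assumes t: "norm t < norm z" shows "norm (z * t) < 1" "norm (t / z) < 1"
proof -
  have "norm (z * t) = norm z * norm t" by (simp add: norm_mult)
  also have "\<dots> \<le> norm t" using z by (intro mult_left_le_one_le) auto
  finally show "norm (z * t) < 1" using t z by simp
  show "norm (t / z) < 1" using t z by (simp add: norm_divide divide_less_eq)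
qed

lemma den_qpoch: "(\<Prod>j<K. den t j) = qpoch (z * t) q K * qpoch (t / z) q K"
  unfolding qpoch_def prod.distrib[symmetric]
  by (intro prod.cong refl) (simp add: den_def sj_def algebra_simps)

lemma den_Suc_qpoch: "(\<Prod>j<K. den t (Suc j)) = qpoch (of_real q * z * t) q K * qpoch (of_real q * t / z) q K"
  unfolding qpoch_def prod.distrib[symmetric]
  by (intro prod.cong refl) (simp add: den_def sj_def algebra_simps)

lemma fac_tau:
  assumes aq: "\<alpha> = q" and tau: "\<tau> \<noteq> 0"
    and h: "of_real q * (\<tau> + 1/\<tau>) = of_real \<beta> * (z + 1/z)"
  shows "fac t j = (1 - (of_real q * \<tau> * t) * of_real (q ^ j)) * (1 - (of_real q * t / \<tau>) * of_real (q ^ j))"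
proof -
  have e1: "complex_of_real (q ^ (2*j+2)) = (of_real q * of_real (q ^ j))^2"
  proof -
    have "q ^ (2*j+2) = q ^ (j + j) * q ^ 2" by (simp only: mult_2 power_add)
    also have "\<dots> = (q * q ^ j)^2" by (simp only: power_add power2_eq_square mult_ac)
    finally have "q ^ (2*j+2) = (q * q ^ j)^2" .
    then show ?thesis by (metis of_real_mult of_real_power)
  qed
  have "fac t j = 1 + (of_real q * of_real (q ^ j))^2 * t^2 - of_real (q ^ j) * t * (of_real \<beta> * (z + 1/z))"
    unfolding fac_def e1 using q by (simp add: aq mult.assoc)
  also have "\<dots> = 1 + (of_real q * of_real (q ^ j))^2 * t^2 - of_real (q ^ j) * t * (of_real q * (\<tau> + 1/\<tau>))"
    by (simp only: h)
  also have "\<dots> = (1 - (of_real q * \<tau> * t) * of_real (q ^ j)) * (1 - (of_real q * t / \<tau>) * of_real (q ^ j))"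
    using tau by (simp add: field_simps power2_eq_square)
  finally show ?thesis .
qed

lemma part2_value:
  assumes aq: "\<alpha> = q" and t: "norm t < norm z" and tau: "\<tau> \<noteq> 0"
    and h: "of_real q * (\<tau> + 1/\<tau>) = of_real \<beta> * (z + 1/z)"
  shows "F t = qpoch_inf (of_real q * \<tau> * t) q * qpoch_inf (of_real q * t / \<tau>) q
                 / (qpoch_inf (z * t) q * qpoch_inf (t / z) q)"
proof -
  have c0: "1 - complex_of_real (\<alpha>/q) = 0" using aq q by simp
  have pe: "(\<Prod>j<K. fac t j / den t j) = qpoch (of_real q * \<tau> * t) q K * qpoch (of_real q * t / \<tau>) q K
                 / (qpoch (z * t) q K * qpoch (t / z) q K)" for K
    unfolding prod_dividef den_qpoch[symmetric] using fac_tau[OF aq tau h]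
    by (simp add: qpoch_def prod.distrib)
  have eq: "F t = (\<Prod>j<K. fac t j / den t j) * F (sj t K)" for K
    using iterate[OF t, of K] unfolding c0 by simp
  have "(\<lambda>K. (\<Prod>j<K. fac t j / den t j) * F (sj t K)) \<longlonglongrightarrow>
      qpoch_inf (of_real q * \<tau> * t) q * qpoch_inf (of_real q * t / \<tau>) q
                 / (qpoch_inf (z * t) q * qpoch_inf (t / z) q) * 1"
    unfolding pe
    using qpoch_inf_nonzero[OF q norm_zt(1)[OF t]] qpoch_inf_nonzero[OF q norm_zt(2)[OF t]]
    by (intro tendsto_intros qpoch_inf_LIMSEQ[OF q] F_tendsto sj_tendsto) auto
  then have "(\<lambda>K. F t) \<longlonglongrightarrow> qpoch_inf (of_real q * \<tau> * t) q * qpoch_inf (of_real q * t / \<tau>) q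
                 / (qpoch_inf (z * t) q * qpoch_inf (t / z) q)"
    by (simp flip: eq)
  then show ?thesis using LIMSEQ_const_iff by blast
qed

lemma part1_value:
  assumes al: "\<bar>\<alpha>\<bar> < q" and t: "norm t < norm z"
  shows "F t = (1 - of_real (\<alpha> / q)) / ((1 - z * t) * (1 - t / z)) * phi32_tau \<alpha> \<beta> q z t"
proof -
  define C where "C = (1 - complex_of_real (\<alpha> / q)) / ((1 - z * t) * (1 - t / z))"
  define ph where "ph k = qpoch (of_real q) q k * tau_poch \<alpha> \<beta> q z t k
           / (qpoch (of_real q * z * t) q k * qpoch (of_real q * t / z) q k * qpoch (of_real q) q k)" for k
  have d0: "den t 0 = (1 - z * t) * (1 - t / z)" by (simp add: den_def sj_def)
  have d0nz: "(1 - z * t) * (1 - t / z) \<noteq> 0" using den_nz[OF t, of 0] d0 by simp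
  have c1: "1 - complex_of_real (\<alpha> / q) \<noteq> 0"
  proof
    assume "1 - complex_of_real (\<alpha> / q) = 0"
    then have "\<alpha> / q = 1" by (metis eq_iff_diff_eq_0 of_real_eq_1_iff)
    then show False using al q by (simp add: field_simps)
  qed
  have Cnz: "C \<noteq> 0" using c1 d0nz by (simp add: C_def)
  have Tk: "(1 - of_real (\<alpha>/q)) * (\<Prod>j<k. fac t j) / (\<Prod>j<Suc k. den t j) = C * ph k" for k
  proof -
    have qq: "qpoch (of_real q) q k \<noteq> 0"
      using qpoch_real_nz[of q q k] alpha_nz[OF q, of q] q by simp
    have "(\<Prod>j<Suc k. den t j) = (1 - z * t) * (1 - t / z) * (qpoch (of_real q * z * t) q k * qpoch (of_real q * t / z) q k)"
      by (simp only: prod.lessThan_Suc_shift d0 den_Suc_qpoch)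
    then show ?thesis
      using qq by (simp add: C_def ph_def tau_poch_fac)
  qed
  have "(\<lambda>k. C * ph k) sums F t" using part1_sums[OF al t] by (simp only: Tk)
  then have "(\<lambda>k. C * ph k / C) sums (F t / C)" by (rule sums_divide)
  then have "ph sums (F t / C)" using Cnz by simp
  then have "phi32_tau \<alpha> \<beta> q z t = F t / C"
    unfolding phi32_tau_def ph_def[symmetric] by (rule sums_unique[symmetric])
  then have "C * phi32_tau \<alpha> \<beta> q z t = F t" using Cnz by simp
  then show ?thesis unfolding C_def by (rule sym)
qed

end


theorem theorem2p16:
  fixes q \<alpha> \<beta> :: real and t z :: complex
  assumes q: "0 < q" "q < 1"
    and \<beta>: "\<beta> < 1"
    and tz: "cmod t < cmod z" "cmod z < 1"
  shows "(\<bar>\<alpha>\<bar> < q \<longrightarrow>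
           (\<lambda>n. qpoch (of_real \<beta>) q n / qpoch (of_real \<alpha>) q n
                 * pab \<alpha> \<beta> q n (z + 1/z) * t ^ n)
           sums ((1 - of_real (\<alpha> / q)) / ((1 - z * t) * (1 - t / z)) * phi32_tau \<alpha> \<beta> q z t))
       \<and> (\<forall>\<tau>::complex. \<tau> \<noteq> 0 \<longrightarrow> of_real q * (\<tau> + 1/\<tau>) = of_real \<beta> * (z + 1/z) \<longrightarrow>
           (\<lambda>n. qpoch (of_real \<beta>) q n / qpoch (of_real q) q n
                 * pab q \<beta> q n (z + 1/z) * t ^ n)
           sums (qpoch_inf (of_real q * \<tau> * t) q * qpoch_inf (of_real q * t / \<tau>) q
                 / (qpoch_inf (z * t) q * qpoch_inf (t / z) q)))"
proof -
  have z0: "z \<noteq> 0" using tz by auto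
  have P1: "\<bar>\<alpha>\<bar> < q \<longrightarrow>
           (\<lambda>n. qpoch (of_real \<beta>) q n / qpoch (of_real \<alpha>) q n
                 * pab \<alpha> \<beta> q n (z + 1/z) * t ^ n)
           sums ((1 - of_real (\<alpha> / q)) / ((1 - z * t) * (1 - t / z)) * phi32_tau \<alpha> \<beta> q z t)"
  proof
    assume al: "\<bar>\<alpha>\<bar> < q"
    interpret gf q \<alpha> \<beta> z using q al \<beta> tz z0 by unfold_locales auto
    show "(\<lambda>n. qpoch (of_real \<beta>) q n / qpoch (of_real \<alpha>) q n
                 * pab \<alpha> \<beta> q n (z + 1/z) * t ^ n)
           sums ((1 - of_real (\<alpha> / q)) / ((1 - z * t) * (1 - t / z)) * phi32_tau \<alpha> \<beta> q z t)"
      using F_sums[OF tz(1)] unfolding part1_value[OF al tz(1)] PP_def .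
  qed
  have P2: "\<forall>\<tau>::complex. \<tau> \<noteq> 0 \<longrightarrow> of_real q * (\<tau> + 1/\<tau>) = of_real \<beta> * (z + 1/z) \<longrightarrow>
           (\<lambda>n. qpoch (of_real \<beta>) q n / qpoch (of_real q) q n
                 * pab q \<beta> q n (z + 1/z) * t ^ n)
           sums (qpoch_inf (of_real q * \<tau> * t) q * qpoch_inf (of_real q * t / \<tau>) q
                 / (qpoch_inf (z * t) q * qpoch_inf (t / z) q))"
  proof (intro allI impI)
    fix \<tau> :: complex
    assume tau: "\<tau> \<noteq> 0" and h: "of_real q * (\<tau> + 1/\<tau>) = of_real \<beta> * (z + 1/z)"
    interpret gf q q \<beta> z using q \<beta> tz z0 by unfold_locales auto
    show "(\<lambda>n. qpoch (of_real \<beta>) q n / qpoch (of_real q) q n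
                 * pab q \<beta> q n (z + 1/z) * t ^ n)
           sums (qpoch_inf (of_real q * \<tau> * t) q * qpoch_inf (of_real q * t / \<tau>) q
                 / (qpoch_inf (z * t) q * qpoch_inf (t / z) q))"
      using F_sums[OF tz(1)] unfolding part2_value[OF refl tz(1) tau h] PP_def .
  qed
  show ?thesis using P1 P2 by blast
qed

end
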